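(* Let $(N,\underline X)\in\aleph^{FGM*}$ with $E[X]<\infty$. For every $n\in A_N$, $$E[X_1\mid N=n]=\sum_{(i_0,i_1)\in\{0,1\}^2}f_{I_0,I_1}(i_0,i_1)\frac{\gamma_{N_{[1+i_0]}}(n)}{\gamma_N(n)}\mu_{X_{[1+i_1]}}=E[X]+\frac{\theta_{01}}{4}\frac{\gamma_{N_{[2]}}(n)-\gamma_{N_{[1]}}(n)}{\gamma_N(n)}\big(\mu_{X_{[2]}}-\mu_{X_{[1]}}\big),$$ where $f_{I_0,I_1}(i_0,i_1)=\tfrac14\big(1+(-1)^{i_0+i_1}\theta_{01}\big)$.
   Context: Collective risk model (CRM): $N$ is a random variable with values in $\mathbb{N}_0$, cdf $F_N$, pmf $\gamma_N(n)=\Pr(N=n)$ and support $A_N=\{n:\gamma_N(n)>0\}$; $\underline X=\{X_j\}_{j\ge1}$ is a sequence of identically distributed strictly positive random variables with common cdf $F_X$ (generic copy $X$). A $d$-variate FGM copula with parameters $\theta_{j_1\dots j_k}$ is $C(u_1,\dots,u_d)=\prod_{m=1}^d u_m\big(1+\sum_{k=2}^d\sum_{j_1<\dots<j_k}\theta_{j_1\dots j_k}\bar u_{j_1}\cdots\bar u_{j_k}\big)$, $\bar u=1-u$, with parameters such that $1+\sum_{k}\sum_{j_1<\dots<j_k}\theta_{j_1\dots j_k}\varepsilon_{j_1}\cdots\varepsilon_{j_k}\ge0$ for all $\varepsilon\in\{-1,1\}^d$. A CRM belongs to $\aleph^{FGM}$ if for every $k\in\mathbb{N}_1$, $k\le\sup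 A_N$, $F_{N,X_1,\dots,X_k}(n,x_1,\dots,x_k)=C_k(F_N(n),F_X(x_1),\dots,F_X(x_k))$ for a $(k+1)$-variate FGM copula $C_k$ with coordinates indexed $0,\dots,k$ (index $0$ for $N$). It belongs to $\aleph^{FGM*}$ if in addition $(N,X_1,\dots,X_k)\overset d=(N,X_{\pi(1)},\dots,X_{\pi(k)})$ for all such $k$ and all permutations $\pi$; then $\theta_{0j}=\theta_{01}$, $\theta_{ij}=\theta_{12}$, $\theta_{0ij}=\theta_{012}$ for all $1\le i<j$. For a random variable $Y$, $Y_{[1]}$, $Y_{[2]}$ denote the minimum and maximum of two iid copies of $Y$, $\mu_{Y_{[j]}}=E[Y_{[j]}]$, and $\gamma_{N_{[j]}}(n)=\Pr(N_{[j]}=n)$. *)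

theory Defs
  imports "HOL-Probability.Probability"
begin

definition fgm_valid :: "nat set \<Rightarrow> (nat set \<Rightarrow> real) \<Rightarrow> bool" where
  "fgm_valid I \<theta> \<longleftrightarrow>
     (\<forall>\<epsilon> \<in> I \<rightarrow>\<^sub>E {-1, 1::real}.
        0 \<le> 1 + (\<Sum>S \<in> {S \<in> Pow I. 2 \<le> card S}. \<theta> S * (\<Prod>j\<in>S. \<epsilon> j)))"

definition fgm_copula :: "nat set \<Rightarrow> (nat set \<Rightarrow> real) \<Rightarrow> (nat \<Rightarrow> real) \<Rightarrow> real" where
  "fgm_copula I \<theta> u =
     (\<Prod>m\<in>I. u m) * (1 + (\<Sum>S \<in> {S \<in> Pow I. 2 \<le> card S}. \<theta> S * (\<Prod>j\<in>S. 1 - u j)))"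

definition pmfN :: "'a measure \<Rightarrow> ('a \<Rightarrow> nat) \<Rightarrow> nat \<Rightarrow> real" where
  "pmfN M N n = measure M {\<omega> \<in> space M. N \<omega> = n}"

definition cdfN :: "'a measure \<Rightarrow> ('a \<Rightarrow> nat) \<Rightarrow> nat \<Rightarrow> real" where
  "cdfN M N n = measure M {\<omega> \<in> space M. N \<omega> \<le> n}"

definition cdfX :: "'a measure \<Rightarrow> (nat \<Rightarrow> 'a \<Rightarrow> real) \<Rightarrow> real \<Rightarrow> real" where
  "cdfX M X t = measure M {\<omega> \<in> space M. X 1 \<omega> \<le> t}"

definition supportN :: "'a measure \<Rightarrow> ('a \<Rightarrow> nat) \<Rightarrow> nat set" where
  "supportN M N = {n. pmfN M N n > 0}"

text \<open>Collective risk model with the stated dependence structure; theta k is the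
  parameter family of the (k+1)-variate FGM copula C_k (coordinate 0 is N).
  The condition "k \<le> sup A_N" is written as "k \<le> m for some m in A_N".\<close>

definition aleph_FGM :: "'a measure \<Rightarrow> ('a \<Rightarrow> nat) \<Rightarrow> (nat \<Rightarrow> 'a \<Rightarrow> real)
                          \<Rightarrow> (nat \<Rightarrow> nat set \<Rightarrow> real) \<Rightarrow> bool" where
  "aleph_FGM M N X \<theta> \<longleftrightarrow>
     prob_space M \<and>
     N \<in> measurable M (count_space UNIV) \<and>
     (\<forall>j\<ge>1. X j \<in> borel_measurable M) \<and>
     (\<forall>j\<ge>1. AE \<omega> in M. 0 < X j \<omega>) \<and>
     (\<forall>j\<ge>1. distr M borel (X j) = distr M borel (X 1)) \<and>
     (\<forall>k\<ge>1. (\<exists>m\<in>supportN M N. k \<le> m) \<longrightarrow>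
        fgm_valid {0..k} (\<theta> k) \<and>
        (\<forall>(n::nat) (x::nat \<Rightarrow> real).
           measure M {\<omega> \<in> space M. N \<omega> \<le> n \<and> (\<forall>j\<in>{1..k}. X j \<omega> \<le> x j)}
           = fgm_copula {0..k} (\<theta> k) (\<lambda>j. if j = 0 then cdfN M N n else cdfX M X (x j))))"

definition crm_vec :: "('a \<Rightarrow> nat) \<Rightarrow> (nat \<Rightarrow> 'a \<Rightarrow> real) \<Rightarrow> nat \<Rightarrow> 'a \<Rightarrow> nat \<Rightarrow> real" where
  "crm_vec N X k \<omega> = restrict (\<lambda>j. if j = 0 then real (N \<omega>) else X j \<omega>) {0..k}"

definition aleph_FGM_star :: "'a measure \<Rightarrow> ('a \<Rightarrow> nat) \<Rightarrow> (nat \<Rightarrow> 'a \<Rightarrow> real)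
                          \<Rightarrow> (nat \<Rightarrow> nat set \<Rightarrow> real) \<Rightarrow> bool" where
  "aleph_FGM_star M N X \<theta> \<longleftrightarrow>
     aleph_FGM M N X \<theta> \<and>
     (\<forall>k\<ge>1. (\<exists>m\<in>supportN M N. k \<le> m) \<longrightarrow>
        (\<forall>\<pi>. \<pi> permutes {1..k} \<longrightarrow>
           distr M (PiM {0..k} (\<lambda>_. borel)) (crm_vec N X k)
           = distr M (PiM {0..k} (\<lambda>_. borel)) (crm_vec N (\<lambda>j. X (\<pi> j)) k)))"

definition ord2 :: "nat \<Rightarrow> 'b::linorder \<Rightarrow> 'b \<Rightarrow> 'b" where
  "ord2 j a b = (if j = 1 then min a b else max a b)"

definition gamma_ord :: "'a measure \<Rightarrow> ('a \<Rightarrow> nat) \<Rightarrow> nat \<Rightarrow> nat \<Rightarrow> real" where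
  "gamma_ord M N j n =
     (let D = distr M (count_space UNIV) N
      in measure (D \<Otimes>\<^sub>M D) {p \<in> space (D \<Otimes>\<^sub>M D). ord2 j (fst p) (snd p) = n})"

definition mu_ord :: "'a measure \<Rightarrow> ('a \<Rightarrow> real) \<Rightarrow> nat \<Rightarrow> real" where
  "mu_ord M Y j =
     (let D = distr M borel Y in \<integral>p. ord2 j (fst p) (snd p) \<partial>(D \<Otimes>\<^sub>M D))"

definition cond_exp_N :: "'a measure \<Rightarrow> ('a \<Rightarrow> nat) \<Rightarrow> ('a \<Rightarrow> real) \<Rightarrow> nat \<Rightarrow> real" where
  "cond_exp_N M N Y n = (\<integral>\<omega>\<in>{\<omega> \<in> space M. N \<omega> = n}. Y \<omega> \<partial>M) / pmfN M N n"

end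

theory Submission
  imports Defs
begin


lemma pow01: "{S \<in> Pow {0..1::nat}. 2 \<le> card S} = {{0,1}}"
proof -
  have "S = {0,1}" if "S \<subseteq> {0..1::nat}" "2 \<le> card S" for S
  proof -
    have "{0..1::nat} = {0,1}" by auto
    then have "S \<subseteq> {0,1}" using that by simp
    moreover have "card {0,1::nat} \<le> card S" using that by simp
    ultimately show ?thesis by (simp add: card_seteq)
  qed
  then show ?thesis by auto
qed

lemma e01: "{0..1::nat} = {0,1}" by auto

lemma fgm2: "fgm_copula {0..1} th (\<lambda>j. if j = 0 then a else b) = a * b * (1 + th {0,1} * (1 - a) * (1 - b))"
  unfolding fgm_copula_def pow01 by (simp add: e01)

lemma pp_measure_times:
  assumes "prob_space D" "A \<in> sets D" "B \<in> sets D"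
  shows "measure (D \<Otimes>\<^sub>M D) (A \<times> B) = measure D A * measure D B"
proof -
  interpret D: prob_space D by fact
  interpret pair_prob_space D D
    by (simp add: pair_prob_space_def pair_sigma_finite_def D.prob_space_axioms D.sigma_finite_measure_axioms)
  have "emeasure (D \<Otimes>\<^sub>M D) (A \<times> B) = emeasure D A * emeasure D B"
    using assms by (simp add: D.emeasure_pair_measure_Times)
  then have "measure (D \<Otimes>\<^sub>M D) (A \<times> B) = enn2real (emeasure D A * emeasure D B)"
    by (simp add: measure_def)
  also have "\<dots> = enn2real (emeasure D A) * enn2real (emeasure D B)" by (rule enn2real_mult)
  finally show ?thesis by (simp add: measure_def)
qed

lemma layer_cake:
  fixes f :: "'a \<Rightarrow> real"
  assumes "sigma_finite_measure M" "f \<in> borel_measurable M"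
  shows "(\<integral>\<^sup>+x. ennreal (f x) \<partial>M)
     = (\<integral>\<^sup>+t. indicator {0..} t * emeasure M {x\<in>space M. t < f x} \<partial>lborel)"
proof -
  interpret pair_sigma_finite M lborel
    using assms(1) by (simp add: pair_sigma_finite_def lborel.sigma_finite_measure_axioms)
  have 1: "ennreal (f x) = (\<integral>\<^sup>+t. indicator {0..} t * indicator {x\<in>space M. t < f x} x \<partial>lborel)"
    if "x \<in> space M" for x
  proof -
    have "(\<lambda>t. indicator {0..} t * indicator {x\<in>space M. t < f x} x) = (indicator {0..<f x} :: real \<Rightarrow> ennreal)"
      using that by (auto simp: indicator_def)
    then show ?thesis
      by (cases "0 \<le> f x") (auto simp: ennreal_neg)
  qed
  have "(\<integral>\<^sup>+x. ennreal (f x) \<partial>M) = (\<integral>\<^sup>+x. (\<integral>\<^sup>+t. indicator {0..} t * indicator {x\<in>space M. t < f x} x \<partial>lborel) \<partial>M)"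
    by (rule nn_integral_cong) (simp add: 1)
  also have "\<dots> = (\<integral>\<^sup>+t. (\<integral>\<^sup>+x. indicator {0..} t * indicator {x\<in>space M. t < f x} x \<partial>M) \<partial>lborel)"
    by (rule Fubini'[symmetric]) (use assms(2) in measurable)
  also have "\<dots> = (\<integral>\<^sup>+t. indicator {0..} t * emeasure M {x\<in>space M. t < f x} \<partial>lborel)"
    by (rule nn_integral_cong) (use assms(2) in \<open>simp add: nn_integral_cmult_indicator\<close>)
  finally show ?thesis .
qed

lemma nn_layer:
  fixes f :: "'a \<Rightarrow> real" and G :: "real \<Rightarrow> real"
  assumes P: "prob_space M" and fm: "f \<in> borel_measurable M"
    and G: "\<And>t. 0 \<le> t \<Longrightarrow> measure M {x\<in>space M. t < f x} = G t"
  shows "(\<integral>\<^sup>+x. ennreal (f x) \<partial>M) = (\<integral>\<^sup>+t. ennreal (indicator {0..} t * G t) \<partial>lborel)"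
proof -
  interpret prob_space M by fact
  have "(\<integral>\<^sup>+x. ennreal (f x) \<partial>M)
     = (\<integral>\<^sup>+t. indicator {0..} t * emeasure M {x\<in>space M. t < f x} \<partial>lborel)"
    by (rule layer_cake) (fact sigma_finite_measure_axioms, fact fm)
  also have "\<dots> = (\<integral>\<^sup>+t. ennreal (indicator {0..} t * G t) \<partial>lborel)"
  proof (rule nn_integral_cong)
    fix t :: real
    show "indicator {0..} t * emeasure M {x\<in>space M. t < f x} = ennreal (indicator {0..} t * G t)"
    proof (cases "0 \<le> t")
      case True
      have "emeasure M {x\<in>space M. t < f x} = ennreal (G t)"
        using G[OF True] fm by (simp add: emeasure_eq_measure)
      then show ?thesis using True by simp
    qed simp
  qed
  finally show ?thesis .
qed

lemma integral_layer:
  fixes f :: "'a \<Rightarrow> real" and G :: "real \<Rightarrow> real"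
  assumes P: "prob_space M" and fm: "f \<in> borel_measurable M" and nn: "AE x in M. 0 \<le> f x"
    and G: "\<And>t. 0 \<le> t \<Longrightarrow> measure M {x\<in>space M. t < f x} = G t"
    and Gm: "G \<in> borel_measurable borel"
  shows "integral\<^sup>L M f = integral\<^sup>L lborel (\<lambda>t. indicator {0..} t * G t)"
proof -
  have "integral\<^sup>L M f = enn2real (\<integral>\<^sup>+x. ennreal (f x) \<partial>M)"
    by (rule integral_eq_nn_integral) (fact fm, fact nn)
  also have "(\<integral>\<^sup>+x. ennreal (f x) \<partial>M) = (\<integral>\<^sup>+t. ennreal (indicator {0..} t * G t) \<partial>lborel)"
    by (rule nn_layer) fact+
  also have "enn2real \<dots> = integral\<^sup>L lborel (\<lambda>t. indicator {0..} t * G t)"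
  proof (rule integral_eq_nn_integral[symmetric])
    show "(\<lambda>t. indicator {0..} t * G t) \<in> borel_measurable lborel" using Gm by simp
    show "AE t in lborel. 0 \<le> indicator {0..} t * G t"
      by (rule AE_I2) (auto simp: indicator_def G[symmetric])
  qed
  finally show ?thesis .
qed

lemma integrable_layer:
  fixes f :: "'a \<Rightarrow> real" and G :: "real \<Rightarrow> real"
  assumes P: "prob_space M" and fi: "integrable M f"
    and G: "\<And>t. 0 \<le> t \<Longrightarrow> measure M {x\<in>space M. t < f x} = G t"
    and Gm: "G \<in> borel_measurable borel"
  shows "integrable lborel (\<lambda>t. indicator {0..} t * G t)"
proof (rule integrableI_nonneg)
  have fm: "f \<in> borel_measurable M" using fi by simp
  show "(\<lambda>t. indicator {0..} t * G t) \<in> borel_measurable lborel" using Gm by simp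
  show "AE t in lborel. 0 \<le> indicator {0..} t * G t"
    by (rule AE_I2) (auto simp: indicator_def G[symmetric])
  have "(\<integral>\<^sup>+t. ennreal (indicator {0..} t * G t) \<partial>lborel) = (\<integral>\<^sup>+x. ennreal (f x) \<partial>M)"
    by (rule nn_layer[symmetric]) (fact P, fact fm, fact G)
  also have "\<dots> \<le> (\<integral>\<^sup>+x. ennreal (norm (f x)) \<partial>M)"
    by (rule nn_integral_mono) (simp add: ennreal_leI)
  also have "\<dots> < \<infinity>" using fi by (simp add: integrable_iff_bounded)
  finally show "(\<integral>\<^sup>+t. ennreal (indicator {0..} t * G t) \<partial>lborel) < \<infinity>" .
qed



theorem mainTheorem4:
  fixes M :: "'a measure" and N :: "'a \<Rightarrow> nat" and X :: "nat \<Rightarrow> 'a \<Rightarrow> real"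
    and \<theta> :: "nat \<Rightarrow> nat set \<Rightarrow> real" and n :: nat
  assumes "aleph_FGM_star M N X \<theta>"
    and "integrable M (X 1)"
    and "n \<in> supportN M N"
  shows "cond_exp_N M N (X 1) n
           = (\<Sum>(i0, i1) \<in> {0, 1::nat} \<times> {0, 1::nat}.
                (1/4) * (1 + (-1) ^ (i0 + i1) * \<theta> 1 {0, 1})
                * (gamma_ord M N (1 + i0) n / pmfN M N n) * mu_ord M (X 1) (1 + i1))
       \<and> cond_exp_N M N (X 1) n
           = integral\<^sup>L M (X 1)
             + \<theta> 1 {0, 1} / 4 * ((gamma_ord M N 2 n - gamma_ord M N 1 n) / pmfN M N n)
               * (mu_ord M (X 1) 2 - mu_ord M (X 1) 1)"
proof -
  have A: "aleph_FGM M N X \<theta>" using assms(1) unfolding aleph_FGM_star_def by blast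
  have PS: "prob_space M" and Nm: "N \<in> measurable M (count_space UNIV)"
    and Xm: "X 1 \<in> borel_measurable M" and Xpos: "AE \<omega> in M. 0 < X 1 \<omega>"
    and cop: "\<forall>k\<ge>1. (\<exists>m\<in>supportN M N. k \<le> m) \<longrightarrow>
        fgm_valid {0..k} (\<theta> k) \<and>
        (\<forall>(n::nat) (x::nat \<Rightarrow> real).
           measure M {\<omega> \<in> space M. N \<omega> \<le> n \<and> (\<forall>j\<in>{1..k}. X j \<omega> \<le> x j)}
           = fgm_copula {0..k} (\<theta> k) (\<lambda>j. if j = 0 then cdfN M N n else cdfX M X (x j)))"
    using A unfolding aleph_FGM_def by auto
  interpret prob_space M by fact
  note [measurable] = Nm Xm Xm[simplified]
  define F where "F = cdfX M X"
  define u where "u = cdfN M N"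
  define th where "th = \<theta> 1 {0,1}"
  define p where "p = pmfN M N n"
  define u' where "u' = (if n = 0 then 0 else u (n - 1))"
  define c where "c = th * (u n * (1 - u n) - u' * (1 - u'))"
  have Fdef: "F t = measure M {\<omega>\<in>space M. X 1 \<omega> \<le> t}" for t
    unfolding F_def cdfX_def ..
  have udef: "u m = measure M {\<omega>\<in>space M. N \<omega> \<le> m}" for m
    unfolding u_def cdfN_def ..
  have pdef: "p = measure M {\<omega>\<in>space M. N \<omega> = n}"
    unfolding p_def pmfN_def ..
  have ppos: "0 < p" using assms(3) unfolding supportN_def p_def by simp
  have Fmono: "mono F" unfolding mono_def Fdef by (auto intro!: finite_measure_mono)
  have Fm: "F \<in> borel_measurable borel" by (rule borel_measurable_mono[OF Fmono])
  have F0: "0 \<le> F t" and F1: "F t \<le> 1" for t unfolding Fdef by auto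

  have H: "measure M {\<omega>\<in>space M. N \<omega> \<le> m \<and> X 1 \<omega> \<le> t}
            = u m * F t * (1 + th * (1 - u m) * (1 - F t))" for m t
  proof (cases "\<exists>m\<in>supportN M N. 1 \<le> m")
    case True
    then have "\<forall>(n::nat) (x::nat \<Rightarrow> real).
           measure M {\<omega> \<in> space M. N \<omega> \<le> n \<and> (\<forall>j\<in>{1..1}. X j \<omega> \<le> x j)}
           = fgm_copula {0..1} (\<theta> 1) (\<lambda>j. if j = 0 then cdfN M N n else cdfX M X (x j))"
      using cop by auto
    from this[rule_format, of m "\<lambda>j. t"] fgm2[of "\<theta> 1" "cdfN M N m" "cdfX M X t"] show ?thesis
      by (simp add: F_def u_def th_def)
  next
    case False
    have z: "measure M {\<omega>\<in>space M. N \<omega> = Suc k} = 0" for k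
    proof -
      have "Suc k \<notin> supportN M N" using False by auto
      then have "\<not> 0 < measure M {\<omega>\<in>space M. N \<omega> = Suc k}"
        unfolding supportN_def pmfN_def by simp
      then show ?thesis using measure_nonneg[of M "{\<omega>\<in>space M. N \<omega> = Suc k}"] by linarith
    qed
    have "AE \<omega> in M. N \<omega> \<noteq> Suc k" for k
      using z[of k] by (subst AE_iff_measurable[OF _ refl]) (auto simp: emeasure_eq_measure)
    then have "AE \<omega> in M. \<forall>k. N \<omega> \<noteq> Suc k" by (simp add: AE_all_countable)
    then have AE0: "AE \<omega> in M. N \<omega> \<le> m"
      by eventually_elim (metis not0_implies_Suc zero_le)
    have um: "u m = 1" unfolding udef
      using AE0 by (subst prob_Collect_eq_1) auto
    have "measure M {\<omega>\<in>space M. N \<omega> \<le> m \<and> X 1 \<omega> \<le> t} = F t"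
      unfolding Fdef by (rule finite_measure_eq_AE) (use AE0 in auto)
    then show ?thesis by (simp add: um)
  qed
  have Nlt: "{\<omega>\<in>space M. N \<omega> < n} = (if n = 0 then {} else {\<omega>\<in>space M. N \<omega> \<le> n - 1})"
    by auto
  have Hlt: "measure M {\<omega>\<in>space M. N \<omega> < n \<and> X 1 \<omega> \<le> t}
            = u' * F t * (1 + th * (1 - u') * (1 - F t))" for t
  proof (cases "n = 0")
    case False
    then have "{\<omega>\<in>space M. N \<omega> < n \<and> X 1 \<omega> \<le> t} = {\<omega>\<in>space M. N \<omega> \<le> n - 1 \<and> X 1 \<omega> \<le> t}"
      by auto
    then show ?thesis using H[of "n - 1" t] False by (simp add: u'_def)
  qed (simp add: u'_def)
  have ult: "measure M {\<omega>\<in>space M. N \<omega> < n} = u'"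
    by (simp add: Nlt u'_def udef)
  have pu: "p = u n - u'"
  proof -
    have "{\<omega>\<in>space M. N \<omega> = n} = {\<omega>\<in>space M. N \<omega> \<le> n} - {\<omega>\<in>space M. N \<omega> < n}" by auto
    then have "p = measure M {\<omega>\<in>space M. N \<omega> \<le> n} - measure M {\<omega>\<in>space M. N \<omega> < n}"
      unfolding pdef by (simp add: finite_measure_Diff subset_eq)
    then show ?thesis by (simp add: udef ult)
  qed
  have Q: "measure M {\<omega>\<in>space M. N \<omega> = n \<and> X 1 \<omega> \<le> t}
     = u n * F t * (1 + th * (1 - u n) * (1 - F t)) - u' * F t * (1 + th * (1 - u') * (1 - F t))" for t
  proof -
    have "{\<omega>\<in>space M. N \<omega> = n \<and> X 1 \<omega> \<le> t}
       = {\<omega>\<in>space M. N \<omega> \<le> n \<and> X 1 \<omega> \<le> t} - {\<omega>\<in>space M. N \<omega> < n \<and> X 1 \<omega> \<le> t}" by auto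
    then have "measure M {\<omega>\<in>space M. N \<omega> = n \<and> X 1 \<omega> \<le> t}
       = measure M {\<omega>\<in>space M. N \<omega> \<le> n \<and> X 1 \<omega> \<le> t} - measure M {\<omega>\<in>space M. N \<omega> < n \<and> X 1 \<omega> \<le> t}"
      by (simp add: finite_measure_Diff subset_eq)
    then show ?thesis using H[of n t] Hlt[of t] by simp
  qed
  define gE where "gE = (\<lambda>t. 1 - F t)"
  define g1 where "g1 = (\<lambda>t. (1 - F t)^2)"
  define g2 where "g2 = (\<lambda>t. 1 - (F t)^2)"
  define g0 where "g0 = (\<lambda>t. p * gE t - c * (gE t - g1 t))"
  have gEm: "gE \<in> borel_measurable borel" unfolding gE_def using Fm by measurable
  have g1m: "g1 \<in> borel_measurable borel" unfolding g1_def using Fm by measurable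
  have g2m: "g2 \<in> borel_measurable borel" unfolding g2_def using Fm by measurable
  have g0m: "g0 \<in> borel_measurable borel" unfolding g0_def using gEm g1m by measurable
  define S where "S = {\<omega>\<in>space M. N \<omega> = n}"
  have Sm[measurable]: "S \<in> sets M" unfolding S_def by measurable
  have G0: "measure M {\<omega>\<in>space M. t < indicator S \<omega> *\<^sub>R X 1 \<omega>} = g0 t" if "0 \<le> t" for t
  proof -
    have "{\<omega>\<in>space M. t < indicator S \<omega> *\<^sub>R X 1 \<omega>} = S - {\<omega>\<in>space M. N \<omega> = n \<and> X 1 \<omega> \<le> t}"
      using that by (auto simp: S_def indicator_def)
    then have e1: "measure M {\<omega>\<in>space M. t < indicator S \<omega> *\<^sub>R X 1 \<omega>}
        = p - measure M {\<omega>\<in>space M. N \<omega> = n \<and> X 1 \<omega> \<le> t}"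
      by (simp add: finite_measure_Diff subset_eq S_def pdef)
    show ?thesis unfolding e1 Q g0_def gE_def g1_def c_def pu
      by (simp add: algebra_simps power2_eq_square)
  qed
  have GE: "measure M {\<omega>\<in>space M. t < X 1 \<omega>} = gE t" for t
  proof -
    have "{\<omega>\<in>space M. t < X 1 \<omega>} = space M - {\<omega>\<in>space M. X 1 \<omega> \<le> t}" by auto
    then show ?thesis by (simp add: finite_measure_compl gE_def Fdef prob_space)
  qed
  have Xnn: "AE \<omega> in M. 0 \<le> X 1 \<omega>" using Xpos by eventually_elim simp
  have I0: "integral\<^sup>L M (\<lambda>\<omega>. indicator S \<omega> *\<^sub>R X 1 \<omega>) = integral\<^sup>L lborel (\<lambda>t. indicator {0..} t * g0 t)"
    by (rule integral_layer[OF PS _ _ G0 g0m]) (measurable, use Xnn in \<open>auto simp: indicator_def\<close>)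
  have IE: "integral\<^sup>L M (X 1) = integral\<^sup>L lborel (\<lambda>t. indicator {0..} t * gE t)"
    by (rule integral_layer[OF PS Xm Xnn GE gEm])
  have intE: "integrable lborel (\<lambda>t. indicator {0..} t * gE t)"
    by (rule integrable_layer[OF PS assms(2) GE gEm])
  define D where "D = distr M borel (X 1)"
  have PD: "prob_space D" unfolding D_def by (rule prob_space_distr) simp
  have PDD: "prob_space (D \<Otimes>\<^sub>M D)" by (rule prob_space_pair[OF PD PD])
  interpret PP: pair_prob_space D D
    by (simp add: pair_prob_space_def pair_sigma_finite_def PD prob_space_imp_sigma_finite)
  have sD[simp, measurable_cong]: "sets D = sets borel" unfolding D_def by simp
  have spD: "space D = UNIV" unfolding D_def by simp
  have spDD: "space (D \<Otimes>\<^sub>M D) = UNIV" by (simp add: space_pair_measure spD)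
  have DgE: "measure D {t<..} = gE t" for t
  proof -
    have "measure D {t<..} = measure M (X 1 -` {t<..} \<inter> space M)"
      unfolding D_def by (rule measure_distr) auto
    also have "X 1 -` {t<..} \<inter> space M = {\<omega>\<in>space M. t < X 1 \<omega>}" by auto
    finally show ?thesis using GE by simp
  qed
  have DF: "measure D {..t} = F t" for t
  proof -
    have "measure D {..t} = measure M (X 1 -` {..t} \<inter> space M)"
      unfolding D_def by (rule measure_distr) auto
    also have "X 1 -` {..t} \<inter> space M = {\<omega>\<in>space M. X 1 \<omega> \<le> t}" by auto
    finally show ?thesis using Fdef by simp
  qed
  have AEpos: "AE x in D. 0 < x"
    using Xpos unfolding D_def by (subst AE_distr_iff) auto
  have AEDD: "AE x in D \<Otimes>\<^sub>M D. 0 < fst x \<and> 0 < snd x"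
  proof (rule PP.AE_pair_measure)
    show "{x \<in> space (D \<Otimes>\<^sub>M D). 0 < fst x \<and> 0 < snd x} \<in> sets (D \<Otimes>\<^sub>M D)" by measurable
    show "AE x in D. AE y in D. 0 < fst (x, y) \<and> 0 < snd (x, y)"
      using AEpos by eventually_elim (use AEpos in auto)
  qed
  have G1: "measure (D \<Otimes>\<^sub>M D) {x\<in>space (D \<Otimes>\<^sub>M D). t < min (fst x) (snd x)} = g1 t" for t
  proof -
    have "{x\<in>space (D \<Otimes>\<^sub>M D). t < min (fst x) (snd x)} = {t<..} \<times> {t<..}"
      by (auto simp: spDD)
    then show ?thesis by (simp add: pp_measure_times[OF PD] DgE g1_def gE_def power2_eq_square)
  qed
  have G2: "measure (D \<Otimes>\<^sub>M D) {x\<in>space (D \<Otimes>\<^sub>M D). t < max (fst x) (snd x)} = g2 t" for t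
  proof -
    have "{x\<in>space (D \<Otimes>\<^sub>M D). t < max (fst x) (snd x)} = space (D \<Otimes>\<^sub>M D) - {..t} \<times> {..t}"
      by (auto simp: spDD)
    then show ?thesis
      by (simp add: PP.finite_measure_compl PP.prob_space
            pp_measure_times[OF PD] DF g2_def power2_eq_square)
  qed
  have I1: "mu_ord M (X 1) 1 = integral\<^sup>L lborel (\<lambda>t. indicator {0..} t * g1 t)"
    unfolding mu_ord_def Let_def D_def[symmetric] ord2_def
    by (simp, rule integral_layer[OF PDD _ _ G1 g1m]) (measurable, use AEDD in \<open>eventually_elim, simp\<close>)
  have I2: "mu_ord M (X 1) 2 = integral\<^sup>L lborel (\<lambda>t. indicator {0..} t * g2 t)"
    unfolding mu_ord_def Let_def D_def[symmetric] ord2_def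
    by (simp, rule integral_layer[OF PDD _ _ G2 g2m]) (measurable, use AEDD in \<open>eventually_elim, auto simp: max_def\<close>)
  have int1: "integrable lborel (\<lambda>t. indicator {0..} t * g1 t)"
  proof (rule Bochner_Integration.integrable_bound[OF intE])
    show "(\<lambda>t. indicator {0..} t * g1 t) \<in> borel_measurable lborel" using g1m by simp
    show "AE t in lborel. norm (indicator {0..} t * g1 t) \<le> norm (indicator {0..} t * gE t)"
    proof (rule AE_I2)
      fix t
      have "0 \<le> gE t" "gE t \<le> 1" using F0[of t] F1[of t] by (auto simp: gE_def)
      moreover have "g1 t = gE t * gE t" by (simp add: g1_def gE_def power2_eq_square)
      ultimately have "g1 t \<le> gE t" "0 \<le> g1 t"
        by (simp_all add: mult_left_le)
      then show "norm (indicator {0..} t * g1 t) \<le> norm (indicator {0..} t * gE t)"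
        by (auto simp: indicator_def)
    qed
  qed
  have L0: "integral\<^sup>L lborel (\<lambda>t. indicator {0..} t * g0 t)
     = p * integral\<^sup>L lborel (\<lambda>t. indicator {0..} t * gE t)
       - c * (integral\<^sup>L lborel (\<lambda>t. indicator {0..} t * gE t) - integral\<^sup>L lborel (\<lambda>t. indicator {0..} t * g1 t))"
  proof -
    have "(\<lambda>t. indicator {0..} t * g0 t) = (\<lambda>t. p * (indicator {0..} t * gE t)
       - c * (indicator {0..} t * gE t - indicator {0..} t * g1 t))"
      by (auto simp: g0_def algebra_simps)
    then show ?thesis using intE int1 by simp
  qed
  have L2: "integral\<^sup>L lborel (\<lambda>t. indicator {0..} t * g2 t)
     = 2 * integral\<^sup>L lborel (\<lambda>t. indicator {0..} t * gE t) - integral\<^sup>L lborel (\<lambda>t. indicator {0..} t * g1 t)"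
  proof -
    have "(\<lambda>t. indicator {0..} t * g2 t) = (\<lambda>t. 2 * (indicator {0..} t * gE t) - indicator {0..} t * g1 t)"
      by (auto simp: g2_def gE_def g1_def algebra_simps power2_eq_square)
    then show ?thesis using intE int1 by simp
  qed
  define DN where "DN = distr M (count_space UNIV) N"
  have PN: "prob_space DN" unfolding DN_def by (rule prob_space_distr) simp
  interpret QQ: pair_prob_space DN DN
    by (simp add: pair_prob_space_def pair_sigma_finite_def PN prob_space_imp_sigma_finite)
  have sDN: "A \<in> sets DN" for A unfolding DN_def by simp
  have spDN: "space (DN \<Otimes>\<^sub>M DN) = UNIV" by (simp add: space_pair_measure DN_def)
  have mDN: "measure DN A = measure M {\<omega>\<in>space M. N \<omega> \<in> A}" for A
  proof -
    have "measure DN A = measure M (N -` A \<inter> space M)"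
      unfolding DN_def by (rule measure_distr) auto
    also have "N -` A \<inter> space M = {\<omega>\<in>space M. N \<omega> \<in> A}" by auto
    finally show ?thesis .
  qed
  have d1: "measure DN {n} = p" by (simp add: mDN pdef)
  have d2: "measure DN {..n} = u n" by (simp add: mDN udef)
  have d3: "measure DN {..<n} = u'" by (simp add: mDN ult)
  have d4: "measure DN {n..} = 1 - u'"
  proof -
    have "{\<omega>\<in>space M. N \<omega> \<in> {n..}} = space M - {\<omega>\<in>space M. N \<omega> < n}" by auto
    then show ?thesis by (simp add: mDN finite_measure_compl prob_space ult)
  qed
  have d5: "measure DN {n<..} = 1 - u n"
  proof -
    have "{\<omega>\<in>space M. N \<omega> \<in> {n<..}} = space M - {\<omega>\<in>space M. N \<omega> \<le> n}" by auto
    then show ?thesis by (simp add: mDN finite_measure_compl prob_space udef)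
  qed
  have gam2: "gamma_ord M N 2 n = p * u n + u' * p"
  proof -
    have "{x\<in>space (DN \<Otimes>\<^sub>M DN). ord2 2 (fst x) (snd x) = n} = {n} \<times> {..n} \<union> {..<n} \<times> {n}"
      by (auto simp: spDN ord2_def max_def)
    then have "gamma_ord M N 2 n = measure (DN \<Otimes>\<^sub>M DN) ({n} \<times> {..n} \<union> {..<n} \<times> {n})"
      unfolding gamma_ord_def Let_def DN_def[symmetric] by simp
    also have "\<dots> = measure (DN \<Otimes>\<^sub>M DN) ({n} \<times> {..n}) + measure (DN \<Otimes>\<^sub>M DN) ({..<n} \<times> {n})"
      by (rule QQ.finite_measure_Union) (auto simp: sDN)
    finally show ?thesis by (simp add: pp_measure_times[OF PN] sDN d1 d2 d3)
  qed
  have gam1: "gamma_ord M N 1 n = p * (1 - u') + (1 - u n) * p"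
  proof -
    have "{x\<in>space (DN \<Otimes>\<^sub>M DN). ord2 1 (fst x) (snd x) = n} = {n} \<times> {n..} \<union> {n<..} \<times> {n}"
      by (auto simp: spDN ord2_def min_def)
    then have "gamma_ord M N 1 n = measure (DN \<Otimes>\<^sub>M DN) ({n} \<times> {n..} \<union> {n<..} \<times> {n})"
      unfolding gamma_ord_def Let_def DN_def[symmetric] by simp
    also have "\<dots> = measure (DN \<Otimes>\<^sub>M DN) ({n} \<times> {n..}) + measure (DN \<Otimes>\<^sub>M DN) ({n<..} \<times> {n})"
      by (rule QQ.finite_measure_Union) (auto simp: sDN)
    finally show ?thesis by (simp add: pp_measure_times[OF PN] sDN d1 d4 d5)
  qed
  define E where "E = integral\<^sup>L lborel (\<lambda>t. indicator {0..} t * gE t)"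
  define m1 where "m1 = integral\<^sup>L lborel (\<lambda>t. indicator {0..} t * g1 t)"
  have ce: "cond_exp_N M N (X 1) n = (p * E - c * (E - m1)) / p"
    unfolding cond_exp_N_def set_lebesgue_integral_def S_def[symmetric] p_def[symmetric]
    using I0 L0 by (simp add: E_def m1_def)
  have mu1: "mu_ord M (X 1) 1 = m1" using I1 m1_def by simp
  have mu2: "mu_ord M (X 1) 2 = 2 * E - m1" using I2 L2 E_def m1_def by simp
  have EX: "integral\<^sup>L M (X 1) = E" using IE E_def by simp
  have g1n: "gamma_ord M N (1 + 0) n = p * (1 - u') + (1 - u n) * p" using gam1 by (simp only: add_0_right)
  have g2n: "gamma_ord M N (1 + 1) n = p * u n + u' * p" using gam2 by (simp only: one_add_one)
  have m1n: "mu_ord M (X 1) (1 + 0) = m1" using mu1 by (simp only: add_0_right)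
  have m2n: "mu_ord M (X 1) (1 + 1) = 2 * E - m1" using mu2 by (simp only: one_add_one)
  have pnz: "p \<noteq> 0" using ppos by simp
  have sumexp: "(\<Sum>(i0, i1) \<in> {0, 1::nat} \<times> {0, 1::nat}.
                (1/4) * (1 + (-1) ^ (i0 + i1) * th)
                * (gamma_ord M N (1 + i0) n / p) * mu_ord M (X 1) (1 + i1))
     = (1/4) * (1 + th) * (gamma_ord M N (1 + 0) n / p) * mu_ord M (X 1) (1 + 0)
     + (1/4) * (1 - th) * (gamma_ord M N (1 + 0) n / p) * mu_ord M (X 1) (1 + 1)
     + (1/4) * (1 - th) * (gamma_ord M N (1 + 1) n / p) * mu_ord M (X 1) (1 + 0)
     + (1/4) * (1 + th) * (gamma_ord M N (1 + 1) n / p) * mu_ord M (X 1) (1 + 1)"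
  proof -
    have ee: "{0,1::nat}\<times>{0,1::nat} = {(0,0),(0,1),(1,0),(1,1)}" by auto
    show ?thesis unfolding ee using pnz by (simp add: field_simps)
  qed
  have cc: "c = th * p * (1 - u n - u')" unfolding c_def pu by (simp add: algebra_simps)
  have ce2: "cond_exp_N M N (X 1) n = E - th * (1 - u n - u') * (E - m1)"
    unfolding ce cc using pnz by (simp add: field_simps)
  have r1: "(p * u n + u' * p) / p = u n + u'" using pnz by (simp add: field_simps)
  have r2: "(p * (1 - u') + (1 - u n) * p) / p = 2 - u n - u'" using pnz by (simp add: field_simps)
  have A1: "cond_exp_N M N (X 1) n
           = (\<Sum>(i0, i1) \<in> {0, 1::nat} \<times> {0, 1::nat}.
                (1/4) * (1 + (-1) ^ (i0 + i1) * th)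
                * (gamma_ord M N (1 + i0) n / p) * mu_ord M (X 1) (1 + i1))"
    unfolding sumexp g1n g2n m1n m2n r1 r2 ce2 by (simp add: field_simps)
  have A2: "cond_exp_N M N (X 1) n
           = integral\<^sup>L M (X 1)
             + th / 4 * ((gamma_ord M N 2 n - gamma_ord M N 1 n) / p)
               * (mu_ord M (X 1) 2 - mu_ord M (X 1) 1)"
    unfolding ce2 EX gam1 gam2 mu1 mu2 diff_divide_distrib r1 r2 by (simp add: algebra_simps)
  show ?thesis using A1 A2 unfolding th_def p_def by blast
qed

end
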